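(* Consider the hierarchical sampling setup and supersample construction in the context, with loss $\ell$ taking values in $[0,1]$, and assume the algorithm is a single-round hierarchical aggregation: $W_L^{i_{1:L}}:=\mu_L^{i_{1:L}}$; for $l=L,L-1,\dots,1$, each node $i_{1:l-1}$ outputs $W_{l-1}^{i_{1:l-1}}\sim P_{l-1}\big(\cdot\mid (W_l^{i_{1:l-1},j})_{j=1}^{n_l}\big)$ via an aggregation kernel $P_{l-1}$, independently across nodes given the inputs; the final hypothesis is $W=W_0$. Assume each aggregation kernel at depth $l$ is $\epsilon_l$-differentially private: for any two input tuples $w,w'$ differing in a single coordinate and any measurable set $S$, $P_{l-1}(S\mid w)\le e^{\epsilon_l}P_{l-1}(S\mid w')$. Then $$\mathrm{gen}(P_{W\mid\mu})\le 2\sum_{l=1}^{L}\sqrt{\min\big(\epsilon_l,\ \epsilon_l(e^{\epsilon_l}-1)\big)}.$$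
   Context: Hierarchical sampling setup. Fix integers $L\ge 1$ and $n_1,\dots,n_L\ge 1$; $N_l=\prod_{k=1}^l n_k$. Nodes at depth $l$ are indexed by $i_{1:l}$ with $i_k\in\{1,\dots,n_k\}$. $\mathcal P_L=\mathcal Z$ (data space), $\mathcal P_l$ = probability measures on $\mathcal P_{l+1}$ for $l<L$; meta-distribution $D\in\mathcal P_0$. Tree: $\mu_1^{i_1}$ i.i.d. $D$; for $l\ge2$, conditionally independently $\mu_l^{i_{1:l}}\sim\mu_{l-1}^{i_{1:l-1}}$; leaves are data points in $\mathcal Z$. "$Z\sim\nu$" for $\nu\in\mathcal P_l$ means sampling down the chain with fresh randomness to a point of $\mathcal Z$. $\hat L(w,\mu)=\frac1{N_L}\sum_{i_{1:L}}\ell(w,\mu_L^{i_{1:L}})$, $L(w)=\mathbb{E}_{Z\sim D}\ell(w,Z)$, $\mathrm{gen}(P_{W\mid\mu})=\mathbb{E}[L(W)-\hat L(W,\mu)]$. Hypotheses of all layers (and data points) are assumed to live in a common space so that aggregation kernels are well defined. Supersample construction. Independent uniform $U_l^{i_{1:l}}\in\{1,2\}$ for every node. $\tilde\mu_1^{i_1}=(\mu_{1,1}^{i_1},\mu_{1,2}^{i_1})\sim D^{\otimes2}$; for $l\ge2$, $\tilde\mu_l^{i_{1:l}}=(\mu_{l,1}^{i_{1:l}},\mu_{l,2}^{i_{1:l}})$ are two conditionally independent draws from the selected parent $\mu_{l-1,U_{l-1}^{i_{1:l-1}}}^{i_{1:l-1}}$. Selected nodes $\mu_l^{i_{1:l}}:=\mu_{l,U_l^{i_{1:l}}}^{i_{1:l}}$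 form the training tree on which the algorithm runs. *)

theory Defs
  imports "HOL-Probability.Probability"
begin

text \<open>All nodes (distributions of every level), data points and
hypotheses live in one measurable space M.  A node x of the sampling tree is represented
abstractly by a point of M, and its distribution of children is given by a Markov kernel
K x (so K x is "the measure x" viewed as a distribution on the next level).  The
meta-distribution D is the distribution of the depth-1 nodes.  Widths: n l children per
node at depth l-1 (l = 1..L).  Aggregation kernel at a node of depth l (l = 0..L-1) is
P l, taking an (extensional) tuple indexed by {..<n (Suc l)}.\<close>

text \<open>Relative index paths from a node at depth a to its descendants at depth b
(0-based indices; the index at depth k ranges over {..<n k}).\<close>
definition hpaths :: "(nat \<Rightarrow> nat) \<Rightarrow> nat \<Rightarrow> nat \<Rightarrow> nat list set" where
  "hpaths n a b = {xs. length xs = b - a \<and> (\<forall>k<length xs. xs ! k < n (a + 1 + k))}"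

text \<open>Outcome space of the subtree rooted at depth l: (output hypothesis, leaves).\<close>
definition outsp :: "'a measure \<Rightarrow> (nat \<Rightarrow> nat) \<Rightarrow> nat \<Rightarrow> nat \<Rightarrow> ('a \<times> (nat list \<Rightarrow> 'a)) measure" where
  "outsp M n L l = M \<Otimes>\<^sub>M PiM (hpaths n l L) (\<lambda>_. M)"

definition hstep :: "'a measure \<Rightarrow> (nat \<Rightarrow> (nat \<Rightarrow> 'a) \<Rightarrow> 'a measure) \<Rightarrow> (nat \<Rightarrow> nat) \<Rightarrow> nat
    \<Rightarrow> nat \<Rightarrow> 'a measure \<Rightarrow> ('a \<Rightarrow> ('a \<times> (nat list \<Rightarrow> 'a)) measure) \<Rightarrow> ('a \<times> (nat list \<Rightarrow> 'a)) measure" where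
  "hstep M P n L l C S =
     bind (PiM {..<n (Suc l)} (\<lambda>j. bind C S))
       (\<lambda>rs. bind (P l (\<lambda>j\<in>{..<n (Suc l)}. fst (rs j)))
         (\<lambda>w. return (outsp M n L l)
                (w, \<lambda>p\<in>hpaths n l L. snd (rs (hd p)) (tl p))))"

text \<open>Subtree rooted at a node with value x at height h (= depth L - h).
At a leaf (h = 0): W_L = mu_L = x.\<close>
fun hsub :: "'a measure \<Rightarrow> ('a \<Rightarrow> 'a measure) \<Rightarrow> (nat \<Rightarrow> (nat \<Rightarrow> 'a) \<Rightarrow> 'a measure) \<Rightarrow> (nat \<Rightarrow> nat)
    \<Rightarrow> nat \<Rightarrow> nat \<Rightarrow> 'a \<Rightarrow> ('a \<times> (nat list \<Rightarrow> 'a)) measure" where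
  "hsub M K P n L 0 x = return (outsp M n L L) (x, \<lambda>p\<in>hpaths n L L. x)"
| "hsub M K P n L (Suc h) x = hstep M P n L (L - Suc h) (K x) (hsub M K P n L h)"

definition hjoint :: "'a measure \<Rightarrow> 'a measure \<Rightarrow> ('a \<Rightarrow> 'a measure) \<Rightarrow> (nat \<Rightarrow> (nat \<Rightarrow> 'a) \<Rightarrow> 'a measure)
    \<Rightarrow> (nat \<Rightarrow> nat) \<Rightarrow> nat \<Rightarrow> ('a \<times> (nat list \<Rightarrow> 'a)) measure" where
  "hjoint M D K P n L = hstep M P n L 0 D (hsub M K P n L (L - 1))"

text \<open>Distribution of a data point Z ~ D: sample down the chain (L levels).\<close>
fun hchain :: "'a measure \<Rightarrow> ('a \<Rightarrow> 'a measure) \<Rightarrow> nat \<Rightarrow> 'a measure" where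
  "hchain D K 0 = D"
| "hchain D K (Suc k) = bind (hchain D K k) K"

definition pop_loss :: "'a measure \<Rightarrow> ('a \<Rightarrow> 'a measure) \<Rightarrow> nat \<Rightarrow> ('a \<Rightarrow> 'a \<Rightarrow> real) \<Rightarrow> 'a \<Rightarrow> real" where
  "pop_loss D K L loss w = (\<integral>z. loss w z \<partial>hchain D K (L - 1))"

definition emp_loss :: "(nat \<Rightarrow> nat) \<Rightarrow> nat \<Rightarrow> ('a \<Rightarrow> 'a \<Rightarrow> real) \<Rightarrow> 'a \<Rightarrow> (nat list \<Rightarrow> 'a) \<Rightarrow> real" where
  "emp_loss n L loss w mu = (\<Sum>p\<in>hpaths n 0 L. loss w (mu p)) / real (\<Prod>l\<in>{1..L}. n l)"

definition hgen :: "'a measure \<Rightarrow> 'a measure \<Rightarrow> ('a \<Rightarrow> 'a measure) \<Rightarrow> (nat \<Rightarrow> (nat \<Rightarrow> 'a) \<Rightarrow> 'a measure)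
    \<Rightarrow> (nat \<Rightarrow> nat) \<Rightarrow> nat \<Rightarrow> ('a \<Rightarrow> 'a \<Rightarrow> real) \<Rightarrow> real" where
  "hgen M D K P n L loss =
     (\<integral>wm. pop_loss D K L loss (fst wm) - emp_loss n L loss (fst wm) (snd wm) \<partial>hjoint M D K P n L)"

definition dp_kernel :: "'a measure \<Rightarrow> nat \<Rightarrow> ((nat \<Rightarrow> 'a) \<Rightarrow> 'a measure) \<Rightarrow> real \<Rightarrow> bool" where
  "dp_kernel M m Q \<epsilon> \<longleftrightarrow>
     (\<forall>w\<in>space (PiM {..<m} (\<lambda>_. M)). \<forall>w'\<in>space (PiM {..<m} (\<lambda>_. M)).
        (\<exists>j<m. \<forall>i. i \<noteq> j \<longrightarrow> w i = w' i) \<longrightarrow>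
        (\<forall>S\<in>sets M. measure (Q w) S \<le> exp \<epsilon> * measure (Q w') S))"

end

theory Submission
  imports Defs "HOL-Probability.Probability"
begin

lemma measurable_PiM_kernel:
  assumes I: "finite I" and N: "N \<in> X \<rightarrow>\<^sub>M prob_algebra Y"
  shows "(\<lambda>x. PiM I (\<lambda>_. N x)) \<in> X \<rightarrow>\<^sub>M prob_algebra (PiM I (\<lambda>_. Y))"
proof (rule measurable_prob_algebra_generated[OF sets_PiM Int_stable_prod_algebra prod_algebra_sets_into_space])
  fix a assume a: "a \<in> space X"
  have Na: "N a \<in> space (prob_algebra Y)" using N a by (auto dest: measurable_space)
  then have pa: "prob_space (N a)" and sa: "sets (N a) = sets Y" by (auto simp: space_prob_algebra)
  show "prob_space (PiM I (\<lambda>_. N a))" using pa by (intro prob_space_PiM)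
  show "sets (PiM I (\<lambda>_. N a)) = sets (PiM I (\<lambda>_. Y))" using sa by (intro sets_PiM_cong) auto
next
  fix A assume "A \<in> prod_algebra I (\<lambda>_. Y)"
  then obtain E where A: "A = Pi\<^sub>E I E" and E: "E \<in> (\<Pi> j\<in>I. sets Y)"
    unfolding prod_algebra_eq_finite[OF I] by auto
  have eq: "emeasure (PiM I (\<lambda>_. N a)) A = (\<Prod>i\<in>I. emeasure (N a) (E i))" if a: "a \<in> space X" for a
  proof -
    have Na: "N a \<in> space (prob_algebra Y)" using N a by (auto dest: measurable_space)
    then have pa: "prob_space (N a)" and sa: "sets (N a) = sets Y" by (auto simp: space_prob_algebra)
    interpret product_sigma_finite "\<lambda>_. N a"
      using pa by (simp add: product_sigma_finite_def prob_space_imp_sigma_finite)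
    show ?thesis unfolding A using E sa by (intro emeasure_PiM I) auto
  qed
  have "(\<lambda>a. \<Prod>i\<in>I. emeasure (N a) (E i)) \<in> borel_measurable X"
    using E by (intro borel_measurable_prod_ennreal measurable_emeasure_kernel[OF measurable_prob_algebraD[OF N]]) auto
  then show "(\<lambda>a. emeasure (PiM I (\<lambda>_. N a)) A) \<in> borel_measurable X"
    by (rule measurable_cong[THEN iffD1, rotated]) (use eq in auto)
qed

lemma hpaths_ConsD:
  assumes "p \<in> hpaths n a b" "a < b"
  shows "p = hd p # tl p" "hd p < n (Suc a)" "tl p \<in> hpaths n (Suc a) b"
proof -
  from assms have len: "length p = b - a" and k: "\<And>k. k < length p \<Longrightarrow> p ! k < n (a + 1 + k)"
    by (auto simp: hpaths_def)
  then have ne: "p \<noteq> []" using assms(2) by auto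
  then show "p = hd p # tl p" by simp
  show "hd p < n (Suc a)" using k[of 0] ne by (simp add: hd_conv_nth)
  have "tl p ! k < n (Suc a + 1 + k)" if "k < length (tl p)" for k
  proof -
    have "Suc k < length p" using that by simp
    from k[OF this] show ?thesis using ne that by (simp add: nth_tl)
  qed
  then show "tl p \<in> hpaths n (Suc a) b" using len ne by (auto simp: hpaths_def)
qed

lemma hpaths_ConsI:
  assumes "j < n (Suc a)" "q \<in> hpaths n (Suc a) b" "a < b"
  shows "j # q \<in> hpaths n a b"
  using assms by (auto simp: hpaths_def nth_Cons split: nat.splits)

definition hG :: "'a measure \<Rightarrow> (nat \<Rightarrow> (nat \<Rightarrow> 'a) \<Rightarrow> 'a measure) \<Rightarrow> (nat \<Rightarrow> nat) \<Rightarrow> nat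
    \<Rightarrow> nat \<Rightarrow> (nat \<Rightarrow> 'a \<times> (nat list \<Rightarrow> 'a)) \<Rightarrow> ('a \<times> (nat list \<Rightarrow> 'a)) measure" where
  "hG M P n L l rs = bind (P l (\<lambda>j\<in>{..<n (Suc l)}. fst (rs j)))
         (\<lambda>w. return (outsp M n L l) (w, \<lambda>p\<in>hpaths n l L. snd (rs (hd p)) (tl p)))"

lemma hstep_hG: "hstep M P n L l C S = bind (PiM {..<n (Suc l)} (\<lambda>j. bind C S)) (hG M P n L l)"
  unfolding hstep_def hG_def by simp

lemma hf_meas:
  assumes R: "sets R = sets (outsp M n L (Suc l))"
  shows "(\<lambda>rs. \<lambda>j\<in>{..<n (Suc l)}. fst (rs j)) \<in> PiM {..<n (Suc l)} (\<lambda>_. R) \<rightarrow>\<^sub>M PiM {..<n (Suc l)} (\<lambda>_. M)"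
proof -
  have e: "sets (PiM {..<n (Suc l)} (\<lambda>_. R)) = sets (PiM {..<n (Suc l)} (\<lambda>_. outsp M n L (Suc l)))"
    using R by (intro sets_PiM_cong) auto
  have "(\<lambda>rs. \<lambda>j\<in>{..<n (Suc l)}. fst (rs j)) \<in> PiM {..<n (Suc l)} (\<lambda>_. outsp M n L (Suc l)) \<rightarrow>\<^sub>M PiM {..<n (Suc l)} (\<lambda>_. M)"
    unfolding outsp_def by measurable
  then show ?thesis using measurable_cong_sets[OF e refl] by blast
qed

lemma hlv_meas:
  assumes R: "sets R = sets (outsp M n L (Suc l))" and l: "l < L"
  shows "(\<lambda>rs. \<lambda>p\<in>hpaths n l L. snd (rs (hd p)) (tl p)) \<in> PiM {..<n (Suc l)} (\<lambda>_. R) \<rightarrow>\<^sub>M PiM (hpaths n l L) (\<lambda>_. M)"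
proof -
  define I where "I = {..<n (Suc l)}"
  define O' where "O' = outsp M n L (Suc l)"
  have e: "sets (PiM I (\<lambda>_. R)) = sets (PiM I (\<lambda>_. O'))"
    using R by (intro sets_PiM_cong) (auto simp: O'_def)
  have "(\<lambda>rs. \<lambda>p\<in>hpaths n l L. snd (rs (hd p)) (tl p)) \<in> PiM I (\<lambda>_. O') \<rightarrow>\<^sub>M PiM (hpaths n l L) (\<lambda>_. M)"
  proof (rule measurable_restrict)
    fix p assume p: "p \<in> hpaths n l L"
    have "hd p \<in> I" "tl p \<in> hpaths n (Suc l) L" using hpaths_ConsD[OF p l] by (auto simp: I_def)
    then show "(\<lambda>rs. snd (rs (hd p)) (tl p)) \<in> PiM I (\<lambda>_. O') \<rightarrow>\<^sub>M M"
      unfolding O'_def outsp_def by measurable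
  qed
  then show ?thesis using measurable_cong_sets[OF e refl] unfolding I_def by blast
qed

lemma hG_meas:
  assumes l: "l < L" and P: "P l \<in> PiM {..<n (Suc l)} (\<lambda>_. M) \<rightarrow>\<^sub>M prob_algebra M"
    and R: "sets R = sets (outsp M n L (Suc l))"
  shows "hG M P n L l \<in> PiM {..<n (Suc l)} (\<lambda>_. R) \<rightarrow>\<^sub>M prob_algebra (outsp M n L l)"
proof -
  note f = hf_meas[OF R] and lv = hlv_meas[OF R l]
  have "(\<lambda>rs. bind (P l (\<lambda>j\<in>{..<n (Suc l)}. fst (rs j)))
             (\<lambda>w. return (outsp M n L l) (w, \<lambda>p\<in>hpaths n l L. snd (rs (hd p)) (tl p))))
        \<in> PiM {..<n (Suc l)} (\<lambda>_. R) \<rightarrow>\<^sub>M prob_algebra (outsp M n L l)"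
  proof (rule measurable_bind_prob_space2)
    show "(\<lambda>rs. P l (\<lambda>j\<in>{..<n (Suc l)}. fst (rs j))) \<in> PiM {..<n (Suc l)} (\<lambda>_. R) \<rightarrow>\<^sub>M prob_algebra M"
      using measurable_comp[OF f P] by (simp add: comp_def)
    show "(\<lambda>(rs, w). return (outsp M n L l) (w, \<lambda>p\<in>hpaths n l L. snd (rs (hd p)) (tl p)))
        \<in> PiM {..<n (Suc l)} (\<lambda>_. R) \<Otimes>\<^sub>M M \<rightarrow>\<^sub>M prob_algebra (outsp M n L l)"
      using lv unfolding outsp_def by measurable
  qed
  then show ?thesis by (simp add: hG_def[abs_def])
qed

lemma hstep_meas:
  assumes l: "l < L" and P: "P l \<in> PiM {..<n (Suc l)} (\<lambda>_. M) \<rightarrow>\<^sub>M prob_algebra M"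
    and S: "S \<in> M \<rightarrow>\<^sub>M prob_algebra (outsp M n L (Suc l))"
  shows "(\<lambda>C. hstep M P n L l C S) \<in> prob_algebra M \<rightarrow>\<^sub>M prob_algebra (outsp M n L l)"
proof -
  define I where "I = {..<n (Suc l)}"
  define O' where "O' = outsp M n L (Suc l)"
  have bS: "(\<lambda>C. bind C S) \<in> prob_algebra M \<rightarrow>\<^sub>M prob_algebra O'"
    unfolding O'_def by (rule measurable_bind_prob_space[where f="\<lambda>x. x", OF _ S]) (simp add: measurable_ident[unfolded id_def])
  have Pi: "(\<lambda>C. PiM I (\<lambda>_. bind C S)) \<in> prob_algebra M \<rightarrow>\<^sub>M prob_algebra (PiM I (\<lambda>_. O'))"
    by (rule measurable_PiM_kernel[OF _ bS]) (simp add: I_def)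
  have G: "hG M P n L l \<in> PiM I (\<lambda>_. O') \<rightarrow>\<^sub>M prob_algebra (outsp M n L l)"
    unfolding I_def O'_def by (rule hG_meas[where P=P and l=l and R="outsp M n L (Suc l)", OF l P refl])
  show ?thesis
    unfolding hstep_hG I_def[symmetric]
    by (rule measurable_bind_prob_space[OF Pi G])
qed

lemma hsub_meas:
  assumes K: "K \<in> M \<rightarrow>\<^sub>M prob_algebra M"
    and P: "\<And>l. l < L \<Longrightarrow> P l \<in> PiM {..<n (Suc l)} (\<lambda>_. M) \<rightarrow>\<^sub>M prob_algebra M"
  shows "h < L \<Longrightarrow> hsub M K P n L h \<in> M \<rightarrow>\<^sub>M prob_algebra (outsp M n L (L - h))"
proof (induction h)
  case 0
  have "(\<lambda>x. (x, \<lambda>p\<in>hpaths n L L. x)) \<in> M \<rightarrow>\<^sub>M outsp M n L L"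
    unfolding outsp_def by measurable
  from measurable_comp[OF this measurable_return_prob_space] show ?case
    by (simp add: comp_def)
next
  case (Suc h)
  define l where "l = L - Suc h"
  have l: "l < L" "Suc l = L - h" using Suc.prems by (auto simp: l_def)
  have S: "hsub M K P n L h \<in> M \<rightarrow>\<^sub>M prob_algebra (outsp M n L (Suc l))"
    using Suc by (simp add: l)
  from measurable_comp[OF K hstep_meas[where P=P and L=L and l=l, OF l(1) P[OF l(1)] S]] show ?case
    by (simp add: comp_def l_def)
qed

fun kiter :: "'a measure \<Rightarrow> ('a \<Rightarrow> 'a measure) \<Rightarrow> nat \<Rightarrow> 'a \<Rightarrow> 'a measure" where
  "kiter M K 0 x = return M x"
| "kiter M K (Suc h) x = bind (K x) (kiter M K h)"

lemma kiter_meas: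
  assumes K: "K \<in> M \<rightarrow>\<^sub>M prob_algebra M"
  shows "kiter M K h \<in> M \<rightarrow>\<^sub>M prob_algebra M"
proof (induction h)
  case 0 then show ?case using measurable_return_prob_space[of M] by (simp add: fun_eq_iff[symmetric])
next
  case (Suc h)
  from measurable_bind_prob_space[OF K Suc] show ?case by simp
qed

lemma kiter_Suc_right:
  assumes K: "K \<in> M \<rightarrow>\<^sub>M prob_algebra M"
  shows "x \<in> space M \<Longrightarrow> bind (kiter M K h x) K = kiter M K (Suc h) x"
proof (induction h arbitrary: x)
  case 0
  have "sets (K x) = sets M" using K 0 by (auto dest: measurable_space simp: space_prob_algebra)
  moreover have "kiter M K 0 = return M" by (simp add: fun_eq_iff)
  ultimately show ?case using 0
    by (simp add: bind_return[OF measurable_prob_algebraD[OF K]] bind_return'')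
next
  case (Suc h)
  have sK: "sets (K x) = sets M" using K Suc.prems by (auto dest: measurable_space simp: space_prob_algebra)
  have m1: "kiter M K h \<in> K x \<rightarrow>\<^sub>M subprob_algebra M"
    using measurable_prob_algebraD[OF kiter_meas[OF K]] measurable_cong_sets[OF sK refl] by blast
  have "bind (kiter M K (Suc h) x) K = bind (K x) (\<lambda>y. bind (kiter M K h y) K)"
    by (simp add: bind_assoc[OF m1 measurable_prob_algebraD[OF K]])
  also have "\<dots> = bind (K x) (kiter M K (Suc h))"
  proof (rule bind_cong[OF refl])
    fix y assume "y \<in> space (K x)"
    then have "y \<in> space M" using sets_eq_imp_space_eq[OF sK] by simp
    then show "bind (kiter M K h y) K = kiter M K (Suc h) y" by (rule Suc.IH)
  qed
  finally show ?case by simp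
qed

lemma hchain_kiter:
  assumes K: "K \<in> M \<rightarrow>\<^sub>M prob_algebra M" and D: "D \<in> space (prob_algebra M)"
  shows "hchain D K k = bind D (kiter M K k)"
proof (induction k)
  case 0
  have "sets D = sets M" using D by (simp add: space_prob_algebra)
  then show ?case by (simp add: bind_return'' fun_eq_iff[symmetric])
next
  case (Suc k)
  have sD: "sets D = sets M" using D by (simp add: space_prob_algebra)
  have "hchain D K (Suc k) = bind (bind D (kiter M K k)) K" using Suc by simp
  also have "\<dots> = bind D (\<lambda>x. bind (kiter M K k x) K)"
  proof -
    have m1: "kiter M K k \<in> D \<rightarrow>\<^sub>M subprob_algebra M"
      using measurable_prob_algebraD[OF kiter_meas[OF K]] measurable_cong_sets[OF sD refl] by blast
    show ?thesis by (rule bind_assoc[OF m1 measurable_prob_algebraD[OF K]])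
  qed
  also have "\<dots> = bind D (kiter M K (Suc k))"
    by (rule bind_cong[OF refl]) (use kiter_Suc_right[OF K] sD sets_eq_imp_space_eq[OF sD] in auto)
  finally show ?case .
qed

lemma hsub_leaf:
  assumes K: "K \<in> M \<rightarrow>\<^sub>M prob_algebra M"
    and P: "\<And>l. l < L \<Longrightarrow> P l \<in> PiM {..<n (Suc l)} (\<lambda>_. M) \<rightarrow>\<^sub>M prob_algebra M"
  shows "h < L \<Longrightarrow> x \<in> space M \<Longrightarrow> q \<in> hpaths n (L - h) L \<Longrightarrow>
    distr (hsub M K P n L h x) M (\<lambda>r. snd r q) = kiter M K h x"
proof (induction h arbitrary: x q)
  case 0
  have qin: "q \<in> hpaths n L L" using 0 by simp
  have q: "q = []" using 0 by (simp add: hpaths_def)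
  have m: "(\<lambda>r. snd r q) \<in> outsp M n L L \<rightarrow>\<^sub>M M" unfolding outsp_def using qin by measurable
  have sp: "(x, \<lambda>p\<in>hpaths n L L. x) \<in> space (outsp M n L L)"
    unfolding outsp_def using 0 by (auto simp: space_pair_measure space_PiM)
  show ?case using distr_return[OF m sp] qin by simp
next
  case (Suc h)
  define l where "l = L - Suc h"
  have l: "l < L" "Suc l = L - h" "L - Suc h = l" using Suc.prems by (auto simp: l_def)
  define I where "I = {..<n (Suc l)}"
  define S where "S = hsub M K P n L h"
  define O' where "O' = outsp M n L (Suc l)"
  define R where "R = bind (K x) S"
  define \<Omega> where "\<Omega> = PiM I (\<lambda>_. R)"
  have S: "S \<in> M \<rightarrow>\<^sub>M prob_algebra O'"
    using hsub_meas[where P=P and n=n and L=L, OF K P, of h] Suc.prems by (simp add: S_def O'_def l)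
  have Kx: "K x \<in> space (prob_algebra M)" using K Suc.prems by (auto dest: measurable_space)
  have sKx: "sets (K x) = sets M" using Kx by (simp add: space_prob_algebra)
  have R: "sets R = sets O'" "prob_space R"
    unfolding R_def using sets_bind'[OF Kx S] prob_space_bind'[OF Kx S] by auto
  have qin: "q \<in> hpaths n l L" using Suc.prems l by simp
  note qd = hpaths_ConsD[OF qin l(1)]
  define j where "j = hd q"
  define q' where "q' = tl q"
  have q: "q = j # q'" "j \<in> I" "q' \<in> hpaths n (Suc l) L"
    using qd by (auto simp: j_def q'_def I_def)
  have G: "hG M P n L l \<in> \<Omega> \<rightarrow>\<^sub>M prob_algebra (outsp M n L l)"
    unfolding \<Omega>_def I_def by (rule hG_meas[where P=P and l=l, OF l(1) P[OF l(1)] R(1)[unfolded O'_def]])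
  have phi: "(\<lambda>r. snd r q) \<in> outsp M n L l \<rightarrow>\<^sub>M M" unfolding outsp_def using qin by measurable
  have phi': "(\<lambda>r. snd r q') \<in> O' \<rightarrow>\<^sub>M M" unfolding O'_def outsp_def using q by measurable
  have phiR: "(\<lambda>r. snd r q') \<in> R \<rightarrow>\<^sub>M M" using phi' measurable_cong_sets[OF R(1) refl] by blast
  have \<Omega>P: "prob_space \<Omega>" unfolding \<Omega>_def using R by (intro prob_space_PiM)
  then have \<Omega>ne: "space \<Omega> \<noteq> {}" by (rule prob_space.not_empty)
  have comp: "(\<lambda>rs. rs j) \<in> \<Omega> \<rightarrow>\<^sub>M R" unfolding \<Omega>_def using q by measurable
  have hs: "hsub M K P n L (Suc h) x = bind \<Omega> (hG M P n L l)"
    by (simp add: hstep_hG l(3) S_def R_def \<Omega>_def I_def)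
  have "distr (bind \<Omega> (hG M P n L l)) M (\<lambda>r. snd r q) = bind \<Omega> (\<lambda>rs. distr (hG M P n L l rs) M (\<lambda>r. snd r q))"
    by (rule distr_bind[OF measurable_prob_algebraD[OF G] \<Omega>ne phi])
  also have "\<dots> = bind \<Omega> (\<lambda>rs. return M (snd (rs j) q'))"
  proof (rule bind_cong[OF refl])
    fix rs assume rs: "rs \<in> space \<Omega>"
    define Prs where "Prs = P l (\<lambda>j\<in>{..<n (Suc l)}. fst (rs j))"
    have frs: "(\<lambda>j\<in>{..<n (Suc l)}. fst (rs j)) \<in> space (PiM {..<n (Suc l)} (\<lambda>_. M))"
      using measurable_space[OF hf_meas[OF R(1)[unfolded O'_def]]] rs by (auto simp: \<Omega>_def I_def)
    have Prs: "Prs \<in> space (prob_algebra M)" unfolding Prs_def using P[OF l(1)] frs by (auto dest: measurable_space)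
    then have sP: "sets Prs = sets M" and pP: "prob_space Prs" by (auto simp: space_prob_algebra)
    have lvrs: "(\<lambda>p\<in>hpaths n l L. snd (rs (hd p)) (tl p)) \<in> space (PiM (hpaths n l L) (\<lambda>_. M))"
      using measurable_space[OF hlv_meas[OF R(1)[unfolded O'_def] l(1)]] rs by (auto simp: \<Omega>_def I_def)
    have g: "(\<lambda>w. (w, \<lambda>p\<in>hpaths n l L. snd (rs (hd p)) (tl p))) \<in> Prs \<rightarrow>\<^sub>M outsp M n L l"
      unfolding outsp_def measurable_cong_sets[OF sP refl] using lvrs by measurable
    have "hG M P n L l rs = distr Prs (outsp M n L l) (\<lambda>w. (w, \<lambda>p\<in>hpaths n l L. snd (rs (hd p)) (tl p)))"
      unfolding hG_def Prs_def[symmetric]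
      by (rule bind_return_distr'[OF prob_space.not_empty[OF pP] g])
    also have "distr \<dots> M (\<lambda>r. snd r q) = distr Prs M ((\<lambda>r. snd r q) \<circ> (\<lambda>w. (w, \<lambda>p\<in>hpaths n l L. snd (rs (hd p)) (tl p))))"
      by (rule distr_distr[OF phi g])
    also have "\<dots> = distr Prs M (\<lambda>_. snd (rs j) q')"
      using qin by (intro distr_cong) (auto simp: j_def q'_def)
    also have "\<dots> = return M (snd (rs j) q')"
    proof -
      have "rs j \<in> space R" using measurable_space[OF comp rs] .
      then have "snd (rs j) q' \<in> space M" using measurable_space[OF phiR] by auto
      then show ?thesis by (rule prob_space.distr_const[OF pP])
    qed
    finally show "distr (hG M P n L l rs) M (\<lambda>r. snd r q) = return M (snd (rs j) q')" .
  qed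
  also have "\<dots> = distr \<Omega> M (\<lambda>rs. snd (rs j) q')"
    by (rule bind_return_distr'[OF \<Omega>ne]) (rule measurable_compose[OF comp phiR])
  also have "\<dots> = distr (distr \<Omega> R (\<lambda>rs. rs j)) M (\<lambda>r. snd r q')"
    using distr_distr[OF phiR comp] by (simp add: comp_def)
  also have "distr \<Omega> R (\<lambda>rs. rs j) = R"
    unfolding \<Omega>_def using R(2) q(2) by (intro distr_PiM_component) auto
  also have "distr R M (\<lambda>r. snd r q') = bind (K x) (\<lambda>y. distr (S y) M (\<lambda>r. snd r q'))"
    unfolding R_def
  proof (rule distr_bind[OF _ _ phi'])
    show "S \<in> K x \<rightarrow>\<^sub>M subprob_algebra O'"
      using measurable_prob_algebraD[OF S] measurable_cong_sets[OF sKx refl] by blast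
    show "space (K x) \<noteq> {}" using Kx by (auto simp: space_prob_algebra dest: prob_space.not_empty)
  qed
  also have "\<dots> = bind (K x) (kiter M K h)"
  proof (rule bind_cong[OF refl])
    fix y assume "y \<in> space (K x)"
    then have y: "y \<in> space M" using sets_eq_imp_space_eq[OF sKx] by simp
    show "distr (S y) M (\<lambda>r. snd r q') = kiter M K h y"
      unfolding S_def using Suc.IH[OF _ y] Suc.prems q(3) l by simp
  qed
  finally show ?case using hs by simp
qed

lemma dp_nn:
  assumes dp: "dp_kernel M m Q \<epsilon>" and Q: "Q \<in> PiM {..<m} (\<lambda>_. M) \<rightarrow>\<^sub>M prob_algebra M"
    and w: "w \<in> space (PiM {..<m} (\<lambda>_. M))" and w': "w' \<in> space (PiM {..<m} (\<lambda>_. M))"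
    and j: "j < m" and eq: "\<And>i. i \<noteq> j \<Longrightarrow> w i = w' i"
    and g: "g \<in> borel_measurable M"
  shows "(\<integral>\<^sup>+ x. g x \<partial>Q w) \<le> ennreal (exp \<epsilon>) * (\<integral>\<^sup>+ x. g x \<partial>Q w')"
proof -
  have Qw: "sets (Q w) = sets M" "prob_space (Q w)" using measurable_space[OF Q w] by (auto simp: space_prob_algebra)
  have Qw': "sets (Q w') = sets M" "prob_space (Q w')" using measurable_space[OF Q w'] by (auto simp: space_prob_algebra)
  have ex: "\<exists>j<m. \<forall>i. i \<noteq> j \<longrightarrow> w i = w' i" using j eq by (intro exI[of _ j]) auto
  have ineq: "measure (Q w) S \<le> exp \<epsilon> * measure (Q w') S" if S: "S \<in> sets M" for S
  proof -
    have h0: "\<forall>w\<in>space (PiM {..<m} (\<lambda>_. M)). \<forall>w'\<in>space (PiM {..<m} (\<lambda>_. M)).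
        (\<exists>j<m. \<forall>i. i \<noteq> j \<longrightarrow> w i = w' i) \<longrightarrow>
        (\<forall>S\<in>sets M. measure (Q w) S \<le> exp \<epsilon> * measure (Q w') S)"
      using dp unfolding dp_kernel_def .
    note h1 = bspec[OF bspec[OF h0 w] w']
    note h2 = mp[OF h1 ex]
    show ?thesis by (rule bspec[OF h2 S])
  qed
  have sp: "space (Q w) = space (scale_measure (ennreal (exp \<epsilon>)) (Q w'))"
    using sets_eq_imp_space_eq[OF Qw(1)] sets_eq_imp_space_eq[OF Qw'(1)] by (simp add: space_scale_measure)
  have st: "sets (Q w) = sets (scale_measure (ennreal (exp \<epsilon>)) (Q w'))" using Qw Qw' by simp
  have em: "emeasure (Q w) A \<le> emeasure (scale_measure (ennreal (exp \<epsilon>)) (Q w')) A" for A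
  proof (cases "A \<in> sets M")
    case True
    interpret a: prob_space "Q w" by (rule Qw(2))
    interpret b: prob_space "Q w'" by (rule Qw'(2))
    have "emeasure (Q w) A = ennreal (measure (Q w) A)" by (simp add: a.emeasure_eq_measure)
    also have "\<dots> \<le> ennreal (exp \<epsilon> * measure (Q w') A)" using ineq[OF True] by (rule ennreal_leI)
    also have "\<dots> = ennreal (exp \<epsilon>) * emeasure (Q w') A"
      by (simp add: b.emeasure_eq_measure ennreal_mult)
    finally show ?thesis by simp
  next
    case False
    then show ?thesis using Qw by (simp add: emeasure_notin_sets)
  qed
  have le: "Q w \<le> scale_measure (ennreal (exp \<epsilon>)) (Q w')"
    using sp st em by (simp add: le_measure_iff le_fun_def)
  have "(\<integral>\<^sup>+ x. g x \<partial>Q w) \<le> (\<integral>\<^sup>+ x. g x \<partial>scale_measure (ennreal (exp \<epsilon>)) (Q w'))"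
    by (rule nn_integral_mono_measure[OF _ le]) (simp add: Qw Qw')
  also have "\<dots> = ennreal (exp \<epsilon>) * (\<integral>\<^sup>+ x. g x \<partial>Q w')"
    by (rule nn_integral_scale_measure) (simp add: measurable_cong_sets[OF Qw'(1) refl] g)
  finally show ?thesis .
qed

lemma dp_nonneg:
  assumes dp: "dp_kernel M m Q \<epsilon>" and Q: "Q \<in> PiM {..<m} (\<lambda>_. M) \<rightarrow>\<^sub>M prob_algebra M"
    and m: "m \<ge> 1" and ne: "space M \<noteq> {}"
  shows "\<epsilon> \<ge> 0"
proof -
  obtain a where a: "a \<in> space M" using ne by auto
  define w where "w = (\<lambda>i\<in>{..<m}. a)"
  have w: "w \<in> space (PiM {..<m} (\<lambda>_. M))" using a by (simp add: w_def space_PiM)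
  have Qw: "sets (Q w) = sets M" "prob_space (Q w)" using measurable_space[OF Q w] by (auto simp: space_prob_algebra)
  have "measure (Q w) (space M) \<le> exp \<epsilon> * measure (Q w) (space M)"
  proof -
    have ex: "\<exists>j<m. \<forall>i. i \<noteq> j \<longrightarrow> w i = w i" using m by (intro exI[of _ 0]) auto
    have h0: "\<forall>w\<in>space (PiM {..<m} (\<lambda>_. M)). \<forall>w'\<in>space (PiM {..<m} (\<lambda>_. M)).
        (\<exists>j<m. \<forall>i. i \<noteq> j \<longrightarrow> w i = w' i) \<longrightarrow>
        (\<forall>S\<in>sets M. measure (Q w) S \<le> exp \<epsilon> * measure (Q w') S)"
      using dp unfolding dp_kernel_def .
    note h1 = bspec[OF bspec[OF h0 w] w]
    note h2 = mp[OF h1 ex]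
    show ?thesis by (rule bspec[OF h2 sets.top])
  qed
  moreover have "measure (Q w) (space M) = 1"
    using Qw prob_space.prob_space[OF Qw(2)] sets_eq_imp_space_eq[OF Qw(1)] by simp
  ultimately have "1 \<le> exp \<epsilon>" by simp
  then show ?thesis by simp
qed

lemma fst_restrict_meas:
  assumes R: "sets R = sets (M \<Otimes>\<^sub>M X)"
  shows "(\<lambda>rs. \<lambda>i\<in>I. fst (rs i)) \<in> PiM I (\<lambda>_. R) \<rightarrow>\<^sub>M PiM I (\<lambda>_. M)"
proof -
  have e: "sets (PiM I (\<lambda>_. R)) = sets (PiM I (\<lambda>_. M \<Otimes>\<^sub>M X))"
    using R by (intro sets_PiM_cong) auto
  have "(\<lambda>rs. \<lambda>i\<in>I. fst (rs i)) \<in> PiM I (\<lambda>_. M \<Otimes>\<^sub>M X) \<rightarrow>\<^sub>M PiM I (\<lambda>_. M)"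
    by measurable
  then show ?thesis using measurable_cong_sets[OF e refl] by blast
qed

lemma key:
  fixes R :: "('a \<times> (nat list \<Rightarrow> 'a)) measure" and Q :: "(nat \<Rightarrow> 'a) \<Rightarrow> 'a measure"
  assumes R: "sets R = sets (M \<Otimes>\<^sub>M PiM J (\<lambda>_. M))" "prob_space R"
    and Q: "Q \<in> PiM {..<m} (\<lambda>_. M) \<rightarrow>\<^sub>M prob_algebra M"
    and dp: "dp_kernel M m Q \<epsilon>"
    and j: "j < m" and q: "q \<in> J"
    and Hd: "distr R M (\<lambda>r. snd r q) = Hd"
    and loss_meas: "(\<lambda>(w, z). loss w z) \<in> borel_measurable (M \<Otimes>\<^sub>M M)"
    and loss_range: "\<And>w z. w \<in> space M \<Longrightarrow> z \<in> space M \<Longrightarrow> 0 \<le> loss w z \<and> loss w z \<le> 1"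
  shows "ennreal (exp (-\<epsilon>)) * (\<integral>\<^sup>+ rs. \<integral>\<^sup>+ w. ennreal (\<integral> z. loss w z \<partial>Hd) \<partial>Q (\<lambda>i\<in>{..<m}. fst (rs i)) \<partial>PiM {..<m} (\<lambda>_. R))
       \<le> (\<integral>\<^sup>+ rs. \<integral>\<^sup>+ w. ennreal (loss w (snd (rs j) q)) \<partial>Q (\<lambda>i\<in>{..<m}. fst (rs i)) \<partial>PiM {..<m} (\<lambda>_. R))"
proof -
  define I where "I = {..<m}"
  define I' where "I' = I - {j}"
  have II': "I = insert j I'" "j \<notin> I'" "finite I'" using j by (auto simp: I_def I'_def)
  define f where "f = (\<lambda>rs::nat \<Rightarrow> 'a \<times> (nat list \<Rightarrow> 'a). \<lambda>i\<in>I. fst (rs i))"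
  define c where "c = ennreal (exp (-\<epsilon>))"
  interpret R: prob_space R by (rule R(2))
  interpret PS: product_sigma_finite "\<lambda>_. R"
    by (simp add: product_sigma_finite_def R.sigma_finite_measure_axioms)
  have [measurable_cong]: "sets R = sets (M \<Otimes>\<^sub>M PiM J (\<lambda>_. M))" by (rule R(1))
  note loss_meas[measurable]
  have sndq[measurable]: "(\<lambda>r. snd r q) \<in> R \<rightarrow>\<^sub>M M" using q by measurable
  have sHd: "sets Hd = sets M" unfolding Hd[symmetric] by simp
  have Hdp: "prob_space Hd" unfolding Hd[symmetric] by (rule R.prob_space_distr) simp
  have fm[measurable]: "f \<in> PiM I (\<lambda>_. R) \<rightarrow>\<^sub>M PiM I (\<lambda>_. M)"
    unfolding f_def by (rule fst_restrict_meas[OF R(1)])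
  have kap: "(\<lambda>rs. Q (f rs)) \<in> PiM I (\<lambda>_. R) \<rightarrow>\<^sub>M prob_algebra M"
    using measurable_comp[OF fm Q[folded I_def]] by (simp add: comp_def)
  define pop where "pop = (\<lambda>w. \<integral> z. loss w z \<partial>Hd)"
  have popm[measurable]: "pop \<in> borel_measurable M"
  proof -
    interpret H: prob_space Hd by (rule Hdp)
    have "(\<lambda>(w, z). loss w z) \<in> borel_measurable (M \<Otimes>\<^sub>M Hd)"
      using loss_meas measurable_cong_sets[OF sets_pair_measure_cong[OF refl sHd] refl] by blast
    then show ?thesis unfolding pop_def by (rule H.borel_measurable_lebesgue_integral)
  qed
  have pop_eq: "ennreal (pop w) = (\<integral>\<^sup>+ y. ennreal (loss w (snd y q)) \<partial>R)" if w: "w \<in> space M" for w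
  proof -
    interpret H: prob_space Hd by (rule Hdp)
    have lm: "(\<lambda>z. loss w z) \<in> borel_measurable Hd"
    proof -
      have "(\<lambda>z. loss w z) \<in> borel_measurable M" using w by measurable
      then show ?thesis using measurable_cong_sets[OF sHd refl] by blast
    qed
    have int: "integrable Hd (\<lambda>z. loss w z)"
      by (rule H.integrable_const_bound[where B=1]) (use w loss_range sets_eq_imp_space_eq[OF sHd] lm in auto)
    have "ennreal (pop w) = (\<integral>\<^sup>+ z. ennreal (loss w z) \<partial>Hd)"
      unfolding pop_def
      by (rule nn_integral_eq_integral[symmetric, OF int])
         (use w loss_range sets_eq_imp_space_eq[OF sHd] in auto)
    also have "\<dots> = (\<integral>\<^sup>+ y. ennreal (loss w (snd y q)) \<partial>R)"
      unfolding Hd[symmetric] by (rule nn_integral_distr) (use w in measurable)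
    finally show ?thesis .
  qed
  have jI: "j \<in> I" using j by (simp add: I_def)
  define F where "F = (\<lambda>rs. \<integral>\<^sup>+ w. ennreal (loss w (snd (rs j) q)) \<partial>Q (f rs))"
  define E where "E = (\<lambda>rs. \<integral>\<^sup>+ w. ennreal (pop w) \<partial>Q (f rs))"
  have Fm: "F \<in> borel_measurable (PiM I (\<lambda>_. R))"
    unfolding F_def
    by (rule nn_integral_measurable_subprob_algebra2[OF _ measurable_prob_algebraD[OF kap]]) (use jI q in measurable)
  have Em: "E \<in> borel_measurable (PiM I (\<lambda>_. R))"
    unfolding E_def
    by (rule nn_integral_measurable_subprob_algebra2[OF _ measurable_prob_algebraD[OF kap]]) measurable
  have point: "(\<integral>\<^sup>+ y. c * E (x(j := y)) \<partial>R) \<le> (\<integral>\<^sup>+ y. F (x(j := y)) \<partial>R)"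
    if x: "x \<in> space (PiM I' (\<lambda>_. R))" for x
  proof -
    have upd[measurable]: "(\<lambda>y. x(j := y)) \<in> R \<rightarrow>\<^sub>M PiM I (\<lambda>_. R)"
      unfolding II'(1) using measurable_component_update[OF x II'(2)] .
    define Qy where "Qy = (\<lambda>y'. Q (f (x(j := y'))))"
    have Qym: "Qy \<in> R \<rightarrow>\<^sub>M prob_algebra M"
      using measurable_comp[OF upd kap] by (simp add: comp_def Qy_def)
    have Qys: "sets (Qy y') = sets M" "prob_space (Qy y')" if "y' \<in> space R" for y'
      using measurable_space[OF Qym that] by (auto simp: space_prob_algebra)
    define \<Phi> where "\<Phi> = (\<lambda>y' (y::'a \<times> (nat list \<Rightarrow> 'a)). \<integral>\<^sup>+ w. ennreal (loss w (snd y q)) \<partial>Qy y')"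
    have \<Phi>m[measurable]: "(\<lambda>(y', y). \<Phi> y' y) \<in> borel_measurable (R \<Otimes>\<^sub>M R)"
    proof -
      have k: "(\<lambda>(y'::'a \<times> (nat list \<Rightarrow> 'a), y::'a \<times> (nat list \<Rightarrow> 'a)). Qy y') \<in> R \<Otimes>\<^sub>M R \<rightarrow>\<^sub>M subprob_algebra M"
        using measurable_comp[OF measurable_fst measurable_prob_algebraD[OF Qym]] by (simp add: comp_def case_prod_beta')
      have "(\<lambda>yy. \<integral>\<^sup>+ w. ennreal (loss w (snd (snd yy) q)) \<partial>(case yy of (y', y) \<Rightarrow> Qy y')) \<in> borel_measurable (R \<Otimes>\<^sub>M R)"
        by (rule nn_integral_measurable_subprob_algebra2[OF _ k]) measurable
      then show ?thesis by (simp add: \<Phi>_def case_prod_beta')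
    qed
    have fsp: "f (x(j := y')) \<in> space (PiM {..<m} (\<lambda>_. M))" if "y' \<in> space R" for y'
      using measurable_space[OF fm measurable_space[OF upd that]] by (simp add: I_def)
    have E_eq: "E (x(j := y')) = (\<integral>\<^sup>+ y. \<Phi> y' y \<partial>R)" if y': "y' \<in> space R" for y'
    proof -
      interpret Qp: prob_space "Qy y'" by (rule Qys(2)[OF y'])
      interpret pair_sigma_finite "Qy y'" R
        by (simp add: pair_sigma_finite_def Qp.sigma_finite_measure_axioms R.sigma_finite_measure_axioms)
      have "E (x(j := y')) = (\<integral>\<^sup>+ w. \<integral>\<^sup>+ y. ennreal (loss w (snd y q)) \<partial>R \<partial>Qy y')"
        unfolding E_def Qy_def
        by (rule nn_integral_cong) (use pop_eq sets_eq_imp_space_eq[OF Qys(1)[OF y']] in \<open>auto simp: Qy_def\<close>)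
      also have "\<dots> = (\<integral>\<^sup>+ y. \<integral>\<^sup>+ w. ennreal (loss w (snd y q)) \<partial>Qy y' \<partial>R)"
      proof (rule Fubini'[symmetric])
        have "(\<lambda>(w, y). ennreal (loss w (snd y q))) \<in> borel_measurable (M \<Otimes>\<^sub>M R)" by measurable
        then show "(\<lambda>(w, y). ennreal (loss w (snd y q))) \<in> borel_measurable (Qy y' \<Otimes>\<^sub>M R)"
          using measurable_cong_sets[OF sets_pair_measure_cong[OF Qys(1)[OF y'] refl] refl] by blast
      qed
      finally show ?thesis by (simp add: \<Phi>_def)
    qed
    have dpp: "c * (\<integral>\<^sup>+ y'. \<Phi> y' y \<partial>R) \<le> \<Phi> y y" if y: "y \<in> space R" for y
    proof -
      have "(\<integral>\<^sup>+ y'. \<Phi> y' y \<partial>R) \<le> (\<integral>\<^sup>+ y'. ennreal (exp \<epsilon>) * \<Phi> y y \<partial>R)"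
      proof (rule nn_integral_mono)
        fix y' assume y': "y' \<in> space R"
        have g: "(\<lambda>w. ennreal (loss w (snd y q))) \<in> borel_measurable M" using y by measurable
        show "\<Phi> y' y \<le> ennreal (exp \<epsilon>) * \<Phi> y y"
          unfolding \<Phi>_def Qy_def
        proof (rule dp_nn[OF dp Q fsp[OF y'] fsp[OF y] j _ g])
          fix i assume "i \<noteq> j" then show "f (x(j := y')) i = f (x(j := y)) i" by (simp add: f_def)
        qed
      qed
      also have "\<dots> = ennreal (exp \<epsilon>) * \<Phi> y y" by (simp add: R.emeasure_space_1)
      finally have "c * (\<integral>\<^sup>+ y'. \<Phi> y' y \<partial>R) \<le> c * (ennreal (exp \<epsilon>) * \<Phi> y y)"
        by (rule mult_left_mono) simp
      also have "\<dots> = \<Phi> y y"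
      proof -
        have "c * ennreal (exp \<epsilon>) = 1"
          unfolding c_def by (simp add: ennreal_mult[symmetric] exp_minus field_simps)
        then show ?thesis by (simp add: mult.assoc[symmetric])
      qed
      finally show ?thesis .
    qed
    interpret RR: pair_sigma_finite R R
      by (simp add: pair_sigma_finite_def R.sigma_finite_measure_axioms)
    have "(\<integral>\<^sup>+ y'. c * E (x(j := y')) \<partial>R) = (\<integral>\<^sup>+ y'. c * (\<integral>\<^sup>+ y. \<Phi> y' y \<partial>R) \<partial>R)"
      by (rule nn_integral_cong) (simp add: E_eq)
    also have "\<dots> = c * (\<integral>\<^sup>+ y'. \<integral>\<^sup>+ y. \<Phi> y' y \<partial>R \<partial>R)"
      by (rule nn_integral_cmult) measurable
    also have "(\<integral>\<^sup>+ y'. \<integral>\<^sup>+ y. \<Phi> y' y \<partial>R \<partial>R) = (\<integral>\<^sup>+ y. \<integral>\<^sup>+ y'. \<Phi> y' y \<partial>R \<partial>R)"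
      by (rule RR.Fubini'[symmetric]) measurable
    also have "c * \<dots> = (\<integral>\<^sup>+ y. c * (\<integral>\<^sup>+ y'. \<Phi> y' y \<partial>R) \<partial>R)"
      by (rule nn_integral_cmult[symmetric]) measurable
    also have "\<dots> \<le> (\<integral>\<^sup>+ y. \<Phi> y y \<partial>R)"
      by (rule nn_integral_mono) (rule dpp)
    also have "\<dots> = (\<integral>\<^sup>+ y. F (x(j := y)) \<partial>R)"
      by (rule nn_integral_cong) (simp add: F_def \<Phi>_def Qy_def)
    finally show ?thesis .
  qed
  have "c * (\<integral>\<^sup>+ rs. E rs \<partial>PiM I (\<lambda>_. R)) = (\<integral>\<^sup>+ rs. c * E rs \<partial>PiM I (\<lambda>_. R))"
    by (rule nn_integral_cmult[symmetric, OF Em])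
  also have "\<dots> = (\<integral>\<^sup>+ x. \<integral>\<^sup>+ y. c * E (x(j := y)) \<partial>R \<partial>PiM I' (\<lambda>_. R))"
    unfolding II'(1) by (rule PS.product_nn_integral_insert[OF II'(3) II'(2)]) (rule measurable_compose[OF Em[unfolded II'(1)]], measurable)
  also have "\<dots> \<le> (\<integral>\<^sup>+ x. \<integral>\<^sup>+ y. F (x(j := y)) \<partial>R \<partial>PiM I' (\<lambda>_. R))"
    by (rule nn_integral_mono) (rule point)
  also have "\<dots> = (\<integral>\<^sup>+ rs. F rs \<partial>PiM I (\<lambda>_. R))"
    unfolding II'(1) by (rule PS.product_nn_integral_insert[OF II'(3) II'(2), symmetric]) (rule Fm[unfolded II'(1)])
  finally show ?thesis
    by (simp add: c_def E_def F_def pop_def f_def I_def)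
qed

lemma hpaths_split:
  assumes "a < b"
  shows "hpaths n a b = (\<lambda>(j, q). j # q) ` ({..<n (Suc a)} \<times> hpaths n (Suc a) b)"
proof
  show "hpaths n a b \<subseteq> (\<lambda>(j, q). j # q) ` ({..<n (Suc a)} \<times> hpaths n (Suc a) b)"
  proof
    fix p assume p: "p \<in> hpaths n a b"
    note d = hpaths_ConsD[OF p assms]
    show "p \<in> (\<lambda>(j, q). j # q) ` ({..<n (Suc a)} \<times> hpaths n (Suc a) b)"
      using d by (intro image_eqI[of _ _ "(hd p, tl p)"]) auto
  qed
  show "(\<lambda>(j, q). j # q) ` ({..<n (Suc a)} \<times> hpaths n (Suc a) b) \<subseteq> hpaths n a b"
    using hpaths_ConsI[OF _ _ assms] by auto
qed

lemma hpaths_card: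
  "a \<le> b \<Longrightarrow> finite (hpaths n a b) \<and> card (hpaths n a b) = (\<Prod>k\<in>{Suc a..b}. n k)"
proof (induction "b - a" arbitrary: a)
  case 0
  then have "a = b" by simp
  moreover have "hpaths n b b = {[]}" by (auto simp: hpaths_def)
  ultimately show ?case by simp
next
  case (Suc d)
  then have ab: "a < b" by simp
  have IH: "finite (hpaths n (Suc a) b) \<and> card (hpaths n (Suc a) b) = (\<Prod>k\<in>{Suc (Suc a)..b}. n k)"
    using Suc by simp
  have inj: "inj_on (\<lambda>(j, q). j # q) ({..<n (Suc a)} \<times> hpaths n (Suc a) b)"
    by (auto simp: inj_on_def)
  have e: "{Suc a..b} = insert (Suc a) {Suc (Suc a)..b}" using ab by auto
  show ?case
    unfolding hpaths_split[OF ab] using IH inj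
    by (simp add: card_image card_cartesian_product e)
qed

lemma real_bound:
  fixes e :: real assumes e: "0 \<le> e"
  shows "1 - exp (-e) \<le> 2 * sqrt (min e (e * (exp e - 1)))"
proof (cases "e \<le> 1")
  case True
  have ex: "exp e \<ge> 1 + e" by (rule exp_ge_add_one_self)
  have "e * e \<le> e" using True e by (simp add: mult_left_le)
  moreover have "e * e \<le> e * (exp e - 1)" using ex e by (intro mult_left_mono) linarith+
  ultimately have "e * e \<le> min e (e * (exp e - 1))" by simp
  then have "sqrt (e * e) \<le> sqrt (min e (e * (exp e - 1)))" by (rule real_sqrt_le_mono)
  then have s: "e \<le> sqrt (min e (e * (exp e - 1)))" using e by simp
  have "exp (-e) \<ge> 1 + (-e)" by (rule exp_ge_add_one_self)
  then show ?thesis using s e by linarith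
next
  case False
  have ex: "exp e \<ge> 1 + e" by (rule exp_ge_add_one_self)
  have "1 * 1 \<le> e * (exp e - 1)" using False ex by (intro mult_mono) linarith+
  then have "1 \<le> e * (exp e - 1)" by simp
  then have "1 \<le> min e (e * (exp e - 1))" using False by simp
  then have "1 \<le> sqrt (min e (e * (exp e - 1)))" by simp
  moreover have "exp (-e) > 0" by simp
  ultimately show ?thesis by linarith
qed

theorem theorem2:
  fixes M :: "'a measure" and D :: "'a measure" and K :: "'a \<Rightarrow> 'a measure"
    and P :: "nat \<Rightarrow> (nat \<Rightarrow> 'a) \<Rightarrow> 'a measure"
    and n :: "nat \<Rightarrow> nat" and L :: nat and loss :: "'a \<Rightarrow> 'a \<Rightarrow> real" and \<epsilon> :: "nat \<Rightarrow> real"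
  assumes L: "L \<ge> 1"
    and n: "\<And>l. l \<in> {1..L} \<Longrightarrow> n l \<ge> 1"
    and D: "D \<in> space (prob_algebra M)"
    and K: "K \<in> M \<rightarrow>\<^sub>M prob_algebra M"
    and P: "\<And>l. l < L \<Longrightarrow> P l \<in> PiM {..<n (Suc l)} (\<lambda>_. M) \<rightarrow>\<^sub>M prob_algebra M"
    and loss_meas: "(\<lambda>(w, z). loss w z) \<in> borel_measurable (M \<Otimes>\<^sub>M M)"
    and loss_range: "\<And>w z. w \<in> space M \<Longrightarrow> z \<in> space M \<Longrightarrow> 0 \<le> loss w z \<and> loss w z \<le> 1"
    and dp: "\<And>l. l \<in> {1..L} \<Longrightarrow> dp_kernel M (n l) (P (l - 1)) (\<epsilon> l)"
  shows "hgen M D K P n L loss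
           \<le> 2 * (\<Sum>l = 1..L. sqrt (min (\<epsilon> l) (\<epsilon> l * (exp (\<epsilon> l) - 1))))"
proof -
  note loss_meas[measurable]
  have sD: "sets D = sets M" and pD: "prob_space D" using D by (auto simp: space_prob_algebra)
  have ne: "space M \<noteq> {}" using prob_space.not_empty[OF pD] sets_eq_imp_space_eq[OF sD] by simp
  have eps_nn: "0 \<le> \<epsilon> l" if l: "l \<in> {1..L}" for l
  proof -
    have lt: "l - 1 < L" using l by auto
    have Pl: "P (l - 1) \<in> PiM {..<n l} (\<lambda>_. M) \<rightarrow>\<^sub>M prob_algebra M" using P[OF lt] l by simp
    show ?thesis by (rule dp_nonneg[OF dp[OF l] Pl n[OF l] ne])
  qed
  have P0: "P 0 \<in> PiM {..<n (Suc 0)} (\<lambda>_. M) \<rightarrow>\<^sub>M prob_algebra M" using P L by simp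
  define m where "m = n (Suc 0)"
  define I where "I = {..<m}"
  define S where "S = hsub M K P n L (L - 1)"
  define O1 where "O1 = outsp M n L (Suc 0)"
  define O0 where "O0 = outsp M n L 0"
  have S: "S \<in> M \<rightarrow>\<^sub>M prob_algebra O1"
    using hsub_meas[where P=P and n=n and L=L, OF K P, of "L - 1"] L by (simp add: S_def O1_def)
  define R where "R = bind D S"
  have R: "sets R = sets O1" "prob_space R"
    unfolding R_def using sets_bind'[OF D S] prob_space_bind'[OF D S] by auto
  define \<Omega> where "\<Omega> = PiM I (\<lambda>_. R)"
  have \<Omega>P: "prob_space \<Omega>" unfolding \<Omega>_def using R(2) by (intro prob_space_PiM)
  have G: "hG M P n L 0 \<in> \<Omega> \<rightarrow>\<^sub>M prob_algebra O0"
    unfolding \<Omega>_def I_def m_def O0_def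
    by (rule hG_meas[where P=P and l=0, OF _ P0 R(1)[unfolded O1_def]]) (use L in simp)
  have hj: "hjoint M D K P n L = bind \<Omega> (hG M P n L 0)"
    by (simp add: hjoint_def hstep_hG \<Omega>_def I_def m_def R_def S_def)
  define Hd where "Hd = hchain D K (L - 1)"
  have marg: "distr R M (\<lambda>r. snd r q) = Hd" if q: "q \<in> hpaths n (Suc 0) L" for q
  proof -
    have phi: "(\<lambda>r. snd r q) \<in> O1 \<rightarrow>\<^sub>M M" unfolding O1_def outsp_def using q by measurable
    have "distr R M (\<lambda>r. snd r q) = bind D (\<lambda>x. distr (S x) M (\<lambda>r. snd r q))"
      unfolding R_def
      by (rule distr_bind[OF _ _ phi])
         (use measurable_prob_algebraD[OF S] measurable_cong_sets[OF sD refl] prob_space.not_empty[OF pD] in auto)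
    also have "\<dots> = bind D (kiter M K (L - 1))"
    proof (rule bind_cong[OF refl])
      fix x assume "x \<in> space D"
      then have x: "x \<in> space M" using sets_eq_imp_space_eq[OF sD] by simp
      have q': "q \<in> hpaths n (L - (L - 1)) L" using q L by simp
      show "distr (S x) M (\<lambda>r. snd r q) = kiter M K (L - 1) x"
        unfolding S_def using hsub_leaf[where P=P and n=n and L=L, OF K P _ x q'] L by simp
    qed
    also have "\<dots> = Hd" unfolding Hd_def by (rule hchain_kiter[OF K D, symmetric])
    finally show ?thesis .
  qed
  have Hdp: "prob_space Hd" "sets Hd = sets M"
    unfolding Hd_def hchain_kiter[OF K D]
    using prob_space_bind'[OF D kiter_meas[OF K]] sets_bind'[OF D kiter_meas[OF K]] by auto
  define f where "f = (\<lambda>rs::nat \<Rightarrow> 'a \<times> (nat list \<Rightarrow> 'a). \<lambda>i\<in>I. fst (rs i))"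
  define lv where "lv = (\<lambda>rs::nat \<Rightarrow> 'a \<times> (nat list \<Rightarrow> 'a). \<lambda>p\<in>hpaths n 0 L. snd (rs (hd p)) (tl p))"
  have L0: "0 < L" using L by simp
  have R1: "sets R = sets (outsp M n L (Suc 0))" using R(1) by (simp add: O1_def)
  have hG_eq: "hG M P n L 0 rs = distr (P 0 (f rs)) O0 (\<lambda>w. (w, lv rs))"
      "P 0 (f rs) \<in> space (prob_algebra M)"
      "(\<lambda>w. (w, lv rs)) \<in> P 0 (f rs) \<rightarrow>\<^sub>M O0"
    if rs: "rs \<in> space \<Omega>" for rs
  proof -
    have frs: "f rs \<in> space (PiM {..<n (Suc 0)} (\<lambda>_. M))"
      using measurable_space[OF hf_meas[OF R1]] rs by (auto simp: \<Omega>_def I_def m_def f_def)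
    show Prs: "P 0 (f rs) \<in> space (prob_algebra M)" using P0 frs by (auto dest: measurable_space)
    then have sP: "sets (P 0 (f rs)) = sets M" and pP: "prob_space (P 0 (f rs))" by (auto simp: space_prob_algebra)
    have lvrs: "lv rs \<in> space (PiM (hpaths n 0 L) (\<lambda>_. M))"
      using measurable_space[OF hlv_meas[OF R1 L0]] rs by (auto simp: \<Omega>_def I_def m_def lv_def)
    show g: "(\<lambda>w. (w, lv rs)) \<in> P 0 (f rs) \<rightarrow>\<^sub>M O0"
      unfolding O0_def outsp_def measurable_cong_sets[OF sP refl] using lvrs by measurable
    have "hG M P n L 0 rs = bind (P 0 (f rs)) (\<lambda>w. return O0 (w, lv rs))"
      by (simp add: hG_def f_def lv_def I_def m_def O0_def)
    also have "\<dots> = distr (P 0 (f rs)) O0 (\<lambda>w. (w, lv rs))"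
      by (rule bind_return_distr'[OF prob_space.not_empty[OF pP] g])
    finally show "hG M P n L 0 rs = distr (P 0 (f rs)) O0 (\<lambda>w. (w, lv rs))" .
  qed
  have nnj: "(\<integral>\<^sup>+ x. g x \<partial>hjoint M D K P n L) = (\<integral>\<^sup>+ rs. \<integral>\<^sup>+ w. g (w, lv rs) \<partial>P 0 (f rs) \<partial>\<Omega>)"
    if g: "g \<in> borel_measurable O0" for g
  proof -
    have "(\<integral>\<^sup>+ x. g x \<partial>hjoint M D K P n L) = (\<integral>\<^sup>+ rs. \<integral>\<^sup>+ x. g x \<partial>hG M P n L 0 rs \<partial>\<Omega>)"
      unfolding hj by (rule nn_integral_bind[OF g measurable_prob_algebraD[OF G]])
    also have "\<dots> = (\<integral>\<^sup>+ rs. \<integral>\<^sup>+ w. g (w, lv rs) \<partial>P 0 (f rs) \<partial>\<Omega>)"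
    proof (rule nn_integral_cong)
      fix rs assume rs: "rs \<in> space \<Omega>"
      show "(\<integral>\<^sup>+ x. g x \<partial>hG M P n L 0 rs) = (\<integral>\<^sup>+ w. g (w, lv rs) \<partial>P 0 (f rs))"
        unfolding hG_eq(1)[OF rs] by (rule nn_integral_distr[OF hG_eq(3)[OF rs]]) (simp add: g)
    qed
    finally show ?thesis .
  qed
  define pop where "pop = (\<lambda>w. \<integral> z. loss w z \<partial>Hd)"
  have pop_eq: "pop_loss D K L loss w = pop w" for w by (simp add: pop_loss_def pop_def Hd_def)
  interpret H: prob_space Hd by (rule Hdp(1))
  have popm[measurable]: "pop \<in> borel_measurable M"
  proof -
    have "(\<lambda>(w, z). loss w z) \<in> borel_measurable (M \<Otimes>\<^sub>M Hd)"
      using loss_meas measurable_cong_sets[OF sets_pair_measure_cong[OF refl Hdp(2)] refl] by blast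
    then show ?thesis unfolding pop_def by (rule H.borel_measurable_lebesgue_integral)
  qed
  have popb: "0 \<le> pop w \<and> pop w \<le> 1" if w: "w \<in> space M" for w
  proof -
    have "(\<lambda>z. loss w z) \<in> borel_measurable M" using w by measurable
    then have lm: "(\<lambda>z. loss w z) \<in> borel_measurable Hd" using measurable_cong_sets[OF Hdp(2) refl] by blast
    have sp: "space Hd = space M" using sets_eq_imp_space_eq[OF Hdp(2)] .
    have int: "integrable Hd (\<lambda>z. loss w z)"
      by (rule H.integrable_const_bound[where B=1]) (use w loss_range sp lm in auto)
    have "0 \<le> pop w" unfolding pop_def by (rule integral_nonneg_AE) (use w loss_range sp in auto)
    moreover have "pop w \<le> 1" unfolding pop_def by (rule H.integral_le_const[OF int]) (use w loss_range sp in auto)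
    ultimately show ?thesis by simp
  qed
  have \<Omega>pa: "\<Omega> \<in> space (prob_algebra \<Omega>)" using \<Omega>P by (simp add: space_prob_algebra)
  have sJ: "sets (hjoint M D K P n L) = sets O0" and pJ: "prob_space (hjoint M D K P n L)"
    unfolding hj using sets_bind'[OF \<Omega>pa G] prob_space_bind'[OF \<Omega>pa G] by auto
  interpret J: prob_space "hjoint M D K P n L" by (rule pJ)
  have spJ: "space (hjoint M D K P n L) = space O0" using sets_eq_imp_space_eq[OF sJ] .
  have spO0: "fst x \<in> space M" "\<And>p. p \<in> hpaths n 0 L \<Longrightarrow> snd x p \<in> space M" if "x \<in> space O0" for x
    using that unfolding O0_def outsp_def by (auto simp: space_pair_measure space_PiM)
  have m1: "(\<lambda>x. pop (fst x)) \<in> borel_measurable O0" unfolding O0_def outsp_def by measurable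
  have m1e: "(\<lambda>x. ennreal (pop (fst x))) \<in> borel_measurable O0" using m1 by measurable
  have m2: "(\<lambda>x. loss (fst x) (snd x p)) \<in> borel_measurable O0" if p: "p \<in> hpaths n 0 L" for p
    unfolding O0_def outsp_def using p by measurable
  have m2e: "(\<lambda>x. ennreal (loss (fst x) (snd x p))) \<in> borel_measurable O0" if p: "p \<in> hpaths n 0 L" for p
    using m2[OF p] by measurable
  note mJ = measurable_cong_sets[OF sJ refl]
  define A where "A = (\<integral>\<^sup>+ x. ennreal (pop (fst x)) \<partial>hjoint M D K P n L)"
  define c where "c = (\<lambda>p. \<integral>\<^sup>+ x. ennreal (loss (fst x) (snd x p)) \<partial>hjoint M D K P n L)"
  have dp1: "dp_kernel M m (P 0) (\<epsilon> 1)" using dp[of 1] L by (simp add: m_def)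
  have R': "sets R = sets (M \<Otimes>\<^sub>M PiM (hpaths n (Suc 0) L) (\<lambda>_. M))" using R1 by (simp add: outsp_def)
  have keyapp: "ennreal (exp (- \<epsilon> 1)) * A \<le> c p" if p: "p \<in> hpaths n 0 L" for p
  proof -
    note d = hpaths_ConsD[OF p L0]
    define j where "j = hd p"
    define q where "q = tl p"
    have jq: "j < m" "q \<in> hpaths n (Suc 0) L" using d by (auto simp: j_def q_def m_def)
    have "A = (\<integral>\<^sup>+ rs. \<integral>\<^sup>+ w. ennreal (pop w) \<partial>P 0 (f rs) \<partial>\<Omega>)"
      unfolding A_def using nnj[OF m1e] by simp
    moreover have "c p = (\<integral>\<^sup>+ rs. \<integral>\<^sup>+ w. ennreal (loss w (snd (rs j) q)) \<partial>P 0 (f rs) \<partial>\<Omega>)"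
      unfolding c_def using nnj[OF m2e[OF p]] p by (simp add: lv_def j_def q_def)
    moreover have "ennreal (exp (- \<epsilon> 1)) * (\<integral>\<^sup>+ rs. \<integral>\<^sup>+ w. ennreal (pop w) \<partial>P 0 (f rs) \<partial>\<Omega>)
        \<le> (\<integral>\<^sup>+ rs. \<integral>\<^sup>+ w. ennreal (loss w (snd (rs j) q)) \<partial>P 0 (f rs) \<partial>\<Omega>)"
      using key[OF R' R(2) P0[folded m_def] dp1 jq(1) jq(2) marg[OF jq(2)] loss_meas loss_range]
      by (simp add: \<Omega>_def f_def I_def pop_def)
    ultimately show ?thesis by simp
  qed
  have pjs: "subprob_space (hjoint M D K P n L)" by (rule prob_space_imp_subprob_space[OF pJ])
  have Ale: "A \<le> 1" unfolding A_def
    by (rule subprob_space.nn_integral_le_const[OF pjs]) (use popb spO0 spJ in \<open>auto intro!: AE_I2\<close>)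
  have cle: "c p \<le> 1" if p: "p \<in> hpaths n 0 L" for p unfolding c_def
    by (rule subprob_space.nn_integral_le_const[OF pjs]) (use loss_range spO0 spJ p in \<open>auto intro!: AE_I2\<close>)
  have m1J: "(\<lambda>x. pop (fst x)) \<in> borel_measurable (hjoint M D K P n L)" by (subst mJ) (rule m1)
  have m2J: "(\<lambda>x. loss (fst x) (snd x p)) \<in> borel_measurable (hjoint M D K P n L)" if p: "p \<in> hpaths n 0 L" for p
    by (subst mJ) (rule m2[OF p])
  have int1: "integrable (hjoint M D K P n L) (\<lambda>x. pop (fst x))"
    by (rule J.integrable_const_bound[where B=1]) (use popb spO0 spJ m1J in \<open>auto intro!: AE_I2\<close>)
  have int2: "integrable (hjoint M D K P n L) (\<lambda>x. loss (fst x) (snd x p))" if p: "p \<in> hpaths n 0 L" for p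
    by (rule J.integrable_const_bound[where B=1]) (use loss_range spO0 spJ m2J[OF p] p in \<open>auto intro!: AE_I2\<close>)
  have eq1: "(\<integral> x. pop (fst x) \<partial>hjoint M D K P n L) = enn2real A"
    unfolding A_def by (rule integral_eq_nn_integral) (use popb spO0 spJ m1J in \<open>auto intro!: AE_I2\<close>)
  have eq2: "(\<integral> x. loss (fst x) (snd x p) \<partial>hjoint M D K P n L) = enn2real (c p)" if p: "p \<in> hpaths n 0 L" for p
    unfolding c_def by (rule integral_eq_nn_integral) (use loss_range spO0 spJ m2J[OF p] p in \<open>auto intro!: AE_I2\<close>)
  define N where "N = real (\<Prod>l\<in>{1..L}. n l)"
  have fin: "finite (hpaths n 0 L)" and card: "card (hpaths n 0 L) = (\<Prod>l\<in>{1..L}. n l)"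
    using hpaths_card[of 0 L n] by auto
  have Npos: "N > 0" unfolding N_def
  proof -
    have "0 < (\<Prod>l\<in>{1..L}. n l)" by (rule prod_pos) (use n in \<open>fastforce\<close>)
    then show "0 < real (\<Prod>l\<in>{1..L}. n l)" by (simp only: of_nat_0_less_iff)
  qed
  define e where "e = exp (- \<epsilon> 1)"
  define a where "a = enn2real A"
  have e01: "0 \<le> e" "e \<le> 1" using eps_nn[of 1] L by (auto simp: e_def)
  have a01: "0 \<le> a" "a \<le> 1"
    using enn2real_mono[OF Ale] by (auto simp: a_def)
  have tp: "e * a \<le> enn2real (c p)" if p: "p \<in> hpaths n 0 L" for p
  proof -
    have "enn2real (ennreal e * A) \<le> enn2real (c p)"
      by (rule enn2real_mono) (use keyapp[OF p] cle[OF p] in \<open>auto simp: e_def intro: le_less_trans[OF _ ennreal_less_top[of 1]]\<close>)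
    then show ?thesis using e01 by (simp add: enn2real_mult a_def)
  qed
  have "hgen M D K P n L loss
      = (\<integral> x. pop (fst x) - (\<Sum>p\<in>hpaths n 0 L. loss (fst x) (snd x p)) / N \<partial>hjoint M D K P n L)"
    by (simp add: hgen_def emp_loss_def pop_eq N_def)
  also have "\<dots> = (\<integral> x. pop (fst x) \<partial>hjoint M D K P n L)
      - (\<integral> x. (\<Sum>p\<in>hpaths n 0 L. loss (fst x) (snd x p)) / N \<partial>hjoint M D K P n L)"
    by (rule Bochner_Integration.integral_diff[OF int1]) (use int2 in auto)
  also have "(\<integral> x. (\<Sum>p\<in>hpaths n 0 L. loss (fst x) (snd x p)) / N \<partial>hjoint M D K P n L)
      = (\<Sum>p\<in>hpaths n 0 L. enn2real (c p)) / N"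
    by (simp add: integral_sum int2 eq2)
  finally have hg: "hgen M D K P n L loss = a - (\<Sum>p\<in>hpaths n 0 L. enn2real (c p)) / N" by (simp add: eq1 a_def)
  have "real (card (hpaths n 0 L)) * (e * a) \<le> (\<Sum>p\<in>hpaths n 0 L. enn2real (c p))"
    by (rule sum_bounded_below) (rule tp)
  then have "N * (e * a) \<le> (\<Sum>p\<in>hpaths n 0 L. enn2real (c p))" by (simp add: card N_def)
  then have "e * a \<le> (\<Sum>p\<in>hpaths n 0 L. enn2real (c p)) / N" using Npos by (simp add: field_simps)
  then have "hgen M D K P n L loss \<le> a - e * a" using hg by simp
  also have "\<dots> = (1 - e) * a" by (simp add: algebra_simps)
  also have "\<dots> \<le> (1 - e) * 1" using e01 a01 by (intro mult_left_mono) auto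
  also have "\<dots> \<le> 2 * sqrt (min (\<epsilon> 1) (\<epsilon> 1 * (exp (\<epsilon> 1) - 1)))"
    using real_bound[OF eps_nn[of 1]] L by (simp add: e_def)
  also have "\<dots> \<le> 2 * (\<Sum>l = 1..L. sqrt (min (\<epsilon> l) (\<epsilon> l * (exp (\<epsilon> l) - 1))))"
  proof -
    have "sqrt (min (\<epsilon> 1) (\<epsilon> 1 * (exp (\<epsilon> 1) - 1))) \<le> (\<Sum>l = 1..L. sqrt (min (\<epsilon> l) (\<epsilon> l * (exp (\<epsilon> l) - 1))))"
    proof (rule member_le_sum)
      show "1 \<in> {1..L}" using L by simp
      fix l assume "l \<in> {1..L} - {1}"
      then have l: "0 \<le> \<epsilon> l" using eps_nn by auto
      then show "0 \<le> sqrt (min (\<epsilon> l) (\<epsilon> l * (exp (\<epsilon> l) - 1)))" by simp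
    qed simp
    then show ?thesis by simp
  qed
  finally show ?thesis .
qed

end
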